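(* Let $\Lambda=KQ/\langle I\rangle$ be a gentle algebra over an algebraically closed field $K$, let $\Gamma=KQ^{Aus}/\langle I^{Aus}\rangle$, and let $\Phi:\mathrm{mod}\,\Lambda\to\mathrm{mod}\,\Gamma$ and $\mathrm{res}:\mathrm{mod}\,\Gamma\to\mathrm{mod}\,\Lambda$ be the functors described in the context. Then: (i) For all $M\in\mathrm{mod}\,\Lambda$ and $N\in\mathrm{mod}\,\Gamma$, the maps $\mathrm{Hom}_\Gamma(\Phi(M),N)\xrightarrow{\mathrm{res}}\mathrm{Hom}_\Lambda(\mathrm{res}\,\Phi(M),\mathrm{res}\,N)\cong\mathrm{Hom}_\Lambda(M,\mathrm{res}\,N)$ and $\mathrm{Hom}_\Gamma(N,\Phi(M))\xrightarrow{\mathrm{res}}\mathrm{Hom}_\Lambda(\mathrm{res}\,N,\mathrm{res}\,\Phi(M))\cong\mathrm{Hom}_\Lambda(\mathrm{res}\,N,M)$ are injective (where the isomorphisms come from the natural isomorphism $\mathrm{res}\,\Phi(M)\cong M$). (ii) The functor $\Phi$ is fully faithful. In particular, $\Phi$ preserves injective and surjective morphisms.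
   Context: Conventions: arrows $\alpha:s(\alpha)\to t(\alpha)$; paths are composed right to left, so $\beta\alpha$ means $\alpha$ followed by $\beta$. A gentle algebra is $\Lambda=KQ/\langle I\rangle$ (finite dimensional) where $I$ is a set of length-$2$ paths such that: each vertex is the start of at most two and the end of at most two arrows; for each arrow $\alpha$ there is at most one arrow $\beta$ with $t(\beta)=s(\alpha)$, $\alpha\beta\notin I$, at most one $\gamma$ with $s(\gamma)=t(\alpha)$, $\gamma\alpha\notin I$, at most one $\beta$ with $t(\beta)=s(\alpha)$, $\alpha\beta\in I$, and at most one $\gamma$ with $s(\gamma)=t(\alpha)$, $\gamma\alpha\in I$. Modules are finite dimensional left modules, identified with representations $M=((M_i)_{i\in Q_0},(M_\alpha)_{\alpha\in Q_1})$ of $(Q,I)$. $\mathcal{C}(\Lambda)$ is the set of repetition-free cyclic paths $\alpha_1\cdots\alpha_n$ (up to cyclic permutation) with $\alpha_i\alpha_{i+1}\in I$ for all $i$ (indices mod $n$). $Q_1^{cyc}$ is the set of arrows lying on some cycle in $\mathcal{C}(\Lambda)$ and $Q_1^{ncyc}=Q_1\setminus Q_1^{cyc}$. The quiver $Q^{Aus}$ has vertex set $Q_0\sqcup Q_1^{cyc}$ and arrow set $Q_1^{ncyc}\sqcup\{\alpha^+:s(\alpha)\to\alpha\mid\alpha\in Q_1^{cyc}\}\sqcup\{\alpha^-:\alpha\to t(\alpha)\mid\alpha\in Q_1^{cyc}\}$; $I^{Aus}=\{\beta^+\alpha^-\mid\beta\alpha\in I,\ \alpha,\beta\in Q_1^{cyc}\}\cup\{\beta\alpha\mid\beta\alpha\in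 I,\ \alpha,\beta\in Q_1^{ncyc}\}$. The algebra $\Gamma=KQ^{Aus}/\langle I^{Aus}\rangle$ is (isomorphic to) the Cohen–Macaulay Auslander algebra of $\Lambda$. The functor $\Phi$: for $M\in\mathrm{mod}\,\Lambda$, $\Phi(M)=\widehat{M}$ has $\widehat{M}_i=M_i$ for $i\in Q_0$, $\widehat{M}_\alpha=\mathrm{Im}\,M_\alpha$ for $\alpha\in Q_1^{cyc}$, $\widehat{M}_\beta=M_\beta$ for $\beta\in Q_1^{ncyc}$, and $\widehat{M}_{\alpha^+}:M_{s(\alpha)}\to\mathrm{Im}\,M_\alpha$, $\widehat{M}_{\alpha^-}:\mathrm{Im}\,M_\alpha\to M_{t(\alpha)}$ the surjection and inclusion factoring $M_\alpha$; on morphisms $\Phi$ acts by the induced maps. The functor $\mathrm{res}$: for $N\in\mathrm{mod}\,\Gamma$, $(\mathrm{res}\,N)_i=N_i$ for $i\in Q_0$, $(\mathrm{res}\,N)_\alpha=N_\alpha$ for $\alpha\in Q_1^{ncyc}$, and $(\mathrm{res}\,N)_\alpha=N_{\alpha^-}N_{\alpha^+}$ for $\alpha\in Q_1^{cyc}$; on morphisms it keeps the components at vertices in $Q_0$. *)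

theory Defs
  imports Main "HOL-Computational_Algebra.Polynomial"
begin

(* A path of length 2 "beta alpha" (alpha followed by beta, t alpha = s beta) is
   encoded as the pair (beta, alpha). *)

definition algebraically_closed :: "'k::field itself \<Rightarrow> bool" where
  "algebraically_closed _ \<longleftrightarrow> (\<forall>p::'k poly. degree p > 0 \<longrightarrow> (\<exists>x. poly p x = 0))"

definition composable :: "('r \<Rightarrow> 'q) \<Rightarrow> ('r \<Rightarrow> 'q) \<Rightarrow> 'r list \<Rightarrow> bool" where
  "composable s t xs \<longleftrightarrow> (\<forall>i. Suc i < length xs \<longrightarrow> t (xs!i) = s (xs!Suc i))"

definition gentle :: "'q set \<Rightarrow> 'r set \<Rightarrow> ('r \<Rightarrow> 'q) \<Rightarrow> ('r \<Rightarrow> 'q) \<Rightarrow> ('r \<times> 'r) set \<Rightarrow> bool" where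
  "gentle Q0 Q1 s t I \<longleftrightarrow>
     finite Q0 \<and> finite Q1 \<and> (\<forall>a\<in>Q1. s a \<in> Q0 \<and> t a \<in> Q0) \<and>
     I \<subseteq> {(b, a). a \<in> Q1 \<and> b \<in> Q1 \<and> t a = s b} \<and>
     (\<forall>v\<in>Q0. card {a\<in>Q1. s a = v} \<le> 2 \<and> card {a\<in>Q1. t a = v} \<le> 2) \<and>
     (\<forall>a\<in>Q1. \<forall>b\<in>Q1. \<forall>b'\<in>Q1.
        t b = s a \<and> (a, b) \<notin> I \<and> t b' = s a \<and> (a, b') \<notin> I \<longrightarrow> b = b') \<and>
     (\<forall>a\<in>Q1. \<forall>c\<in>Q1. \<forall>c'\<in>Q1.
        s c = t a \<and> (c, a) \<notin> I \<and> s c' = t a \<and> (c', a) \<notin> I \<longrightarrow> c = c') \<and>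
     (\<forall>a\<in>Q1. \<forall>b\<in>Q1. \<forall>b'\<in>Q1.
        t b = s a \<and> (a, b) \<in> I \<and> t b' = s a \<and> (a, b') \<in> I \<longrightarrow> b = b') \<and>
     (\<forall>a\<in>Q1. \<forall>c\<in>Q1. \<forall>c'\<in>Q1.
        s c = t a \<and> (c, a) \<in> I \<and> s c' = t a \<and> (c', a) \<in> I \<longrightarrow> c = c') \<and>
     \<comment> \<open>finite dimensionality of KQ/<I>: paths avoiding I have bounded length\<close>
     (\<exists>N. \<forall>xs. length xs = N \<and> set xs \<subseteq> Q1 \<and> composable s t xs \<longrightarrow>
              (\<exists>i. Suc i < N \<and> (xs!Suc i, xs!i) \<in> I))"

(* Q1^cyc : arrows lying on some repetition-free cyclic path alpha_1 ... alpha_n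
   with alpha_i alpha_{i+1} in I (indices mod n); xs!i = alpha_{i+1}. *)
definition cyc_arrows :: "'r set \<Rightarrow> ('r \<times> 'r) set \<Rightarrow> 'r set" where
  "cyc_arrows Q1 I = {a. \<exists>xs. xs \<noteq> [] \<and> distinct xs \<and> set xs \<subseteq> Q1 \<and> a \<in> set xs \<and>
      (\<forall>i<length xs. (xs!i, xs!((i+1) mod length xs)) \<in> I)}"

(* arrows of Q^Aus: Old b (b in Q1^ncyc), Plus a = a^+, Minus a = a^- (a in Q1^cyc) *)
datatype 'r aus_arr = Old 'r | Plus 'r | Minus 'r

definition aus_Q0 :: "'q set \<Rightarrow> 'r set \<Rightarrow> ('r \<times> 'r) set \<Rightarrow> ('q + 'r) set" where
  "aus_Q0 Q0 Q1 I = Inl ` Q0 \<union> Inr ` cyc_arrows Q1 I"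

definition aus_Q1 :: "'r set \<Rightarrow> ('r \<times> 'r) set \<Rightarrow> 'r aus_arr set" where
  "aus_Q1 Q1 I = Old ` (Q1 - cyc_arrows Q1 I) \<union> Plus ` cyc_arrows Q1 I \<union> Minus ` cyc_arrows Q1 I"

fun aus_s :: "('r \<Rightarrow> 'q) \<Rightarrow> 'r aus_arr \<Rightarrow> 'q + 'r" where
  "aus_s s (Old b) = Inl (s b)"
| "aus_s s (Plus a) = Inl (s a)"
| "aus_s s (Minus a) = Inr a"

fun aus_t :: "('r \<Rightarrow> 'q) \<Rightarrow> 'r aus_arr \<Rightarrow> 'q + 'r" where
  "aus_t t (Old b) = Inl (t b)"
| "aus_t t (Plus a) = Inr a"
| "aus_t t (Minus a) = Inl (t a)"

definition aus_I :: "'r set \<Rightarrow> ('r \<times> 'r) set \<Rightarrow> ('r aus_arr \<times> 'r aus_arr) set" where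
  "aus_I Q1 I =
     {(Plus b, Minus a) | a b. (b, a) \<in> I \<and> a \<in> cyc_arrows Q1 I \<and> b \<in> cyc_arrows Q1 I} \<union>
     {(Old b, Old a) | a b. (b, a) \<in> I \<and> a \<in> Q1 - cyc_arrows Q1 I \<and> b \<in> Q1 - cyc_arrows Q1 I}"

definition lin_on :: "('k \<Rightarrow> 'v::plus \<Rightarrow> 'v) \<Rightarrow> ('k \<Rightarrow> 'w::plus \<Rightarrow> 'w) \<Rightarrow> 'v set \<Rightarrow> ('v \<Rightarrow> 'w) \<Rightarrow> bool"
  where "lin_on sV sW A g \<longleftrightarrow>
     (\<forall>x\<in>A. \<forall>y\<in>A. g (x + y) = g x + g y) \<and> (\<forall>c. \<forall>x\<in>A. g (sV c x) = sW c (g x))"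

(* finite dimensional representation (V, f) of the bound quiver (Q, I):
   V i is a finite dimensional subspace of the ambient vector space,
   f a a linear map V (s a) -> V (t a), satisfying the relations. *)
definition is_rep :: "('k::field \<Rightarrow> 'v::ab_group_add \<Rightarrow> 'v) \<Rightarrow> 'q set \<Rightarrow> 'r set \<Rightarrow>
    ('r \<Rightarrow> 'q) \<Rightarrow> ('r \<Rightarrow> 'q) \<Rightarrow> ('r \<times> 'r) set \<Rightarrow> ('q \<Rightarrow> 'v set) \<Rightarrow> ('r \<Rightarrow> 'v \<Rightarrow> 'v) \<Rightarrow> bool"
  where "is_rep sc Q0 Q1 s t I V f \<longleftrightarrow>
     (\<forall>i\<in>Q0. module.subspace sc (V i) \<and> (\<exists>B. finite B \<and> V i \<subseteq> module.span sc B)) \<and>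
     (\<forall>a\<in>Q1. f a ` V (s a) \<subseteq> V (t a) \<and> lin_on sc sc (V (s a)) (f a)) \<and>
     (\<forall>(b, a)\<in>I. \<forall>x\<in>V (s a). f b (f a x) = 0)"

(* morphisms of representations (V,f) -> (W,h); components are normalised to 0
   outside their domain so that the Hom-set is an honest set of functions *)
definition rep_hom :: "('k::field \<Rightarrow> 'v::ab_group_add \<Rightarrow> 'v) \<Rightarrow> ('k \<Rightarrow> 'w::ab_group_add \<Rightarrow> 'w) \<Rightarrow>
    'q set \<Rightarrow> 'r set \<Rightarrow> ('r \<Rightarrow> 'q) \<Rightarrow> ('r \<Rightarrow> 'q) \<Rightarrow>
    ('q \<Rightarrow> 'v set) \<Rightarrow> ('r \<Rightarrow> 'v \<Rightarrow> 'v) \<Rightarrow> ('q \<Rightarrow> 'w set) \<Rightarrow> ('r \<Rightarrow> 'w \<Rightarrow> 'w) \<Rightarrow>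
    ('q \<Rightarrow> 'v \<Rightarrow> 'w) set"
  where "rep_hom sV sW Q0 Q1 s t V f W h =
     {g. (\<forall>i\<in>Q0. g i ` V i \<subseteq> W i \<and> lin_on sV sW (V i) (g i)) \<and>
         (\<forall>a\<in>Q1. \<forall>x\<in>V (s a). g (t a) (f a x) = h a (g (s a) x)) \<and>
         (\<forall>i x. i \<notin> Q0 \<or> x \<notin> V i \<longrightarrow> g i x = 0)}"

definition Phi_V :: "('r \<Rightarrow> 'q) \<Rightarrow> ('q \<Rightarrow> 'v set) \<Rightarrow> ('r \<Rightarrow> 'v \<Rightarrow> 'v) \<Rightarrow> ('q + 'r) \<Rightarrow> 'v set" where
  "Phi_V s V f = (\<lambda>x. case x of Inl i \<Rightarrow> V i | Inr a \<Rightarrow> f a ` V (s a))"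

definition Phi_f :: "('r \<Rightarrow> 'v \<Rightarrow> 'v) \<Rightarrow> 'r aus_arr \<Rightarrow> 'v \<Rightarrow> 'v" where
  "Phi_f f = (\<lambda>c. case c of Old b \<Rightarrow> f b | Plus a \<Rightarrow> f a | Minus a \<Rightarrow> id)"

definition Phi_mor :: "'r set \<Rightarrow> ('r \<times> 'r) set \<Rightarrow> ('r \<Rightarrow> 'q) \<Rightarrow> ('r \<Rightarrow> 'q) \<Rightarrow>
    ('q \<Rightarrow> 'v set) \<Rightarrow> ('r \<Rightarrow> 'v \<Rightarrow> 'v) \<Rightarrow> ('q \<Rightarrow> 'v \<Rightarrow> 'w::zero) \<Rightarrow> ('q + 'r) \<Rightarrow> 'v \<Rightarrow> 'w" where
  "Phi_mor Q1 I s t V f g = (\<lambda>x. case x of Inl i \<Rightarrow> g i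
      | Inr a \<Rightarrow> (\<lambda>y. if a \<in> cyc_arrows Q1 I \<and> y \<in> f a ` V (s a) then g (t a) y else 0))"

definition res_V :: "(('q + 'r) \<Rightarrow> 'w set) \<Rightarrow> 'q \<Rightarrow> 'w set" where
  "res_V W = (\<lambda>i. W (Inl i))"

definition res_f :: "'r set \<Rightarrow> ('r \<times> 'r) set \<Rightarrow> ('r aus_arr \<Rightarrow> 'w \<Rightarrow> 'w) \<Rightarrow> 'r \<Rightarrow> 'w \<Rightarrow> 'w" where
  "res_f Q1 I h = (\<lambda>a. if a \<in> cyc_arrows Q1 I then h (Minus a) \<circ> h (Plus a) else h (Old a))"

definition res_mor :: "(('q + 'r) \<Rightarrow> 'v \<Rightarrow> 'w) \<Rightarrow> 'q \<Rightarrow> 'v \<Rightarrow> 'w" where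
  "res_mor g = (\<lambda>i. g (Inl i))"

end

theory Submission
  imports Defs
begin

lemma cyc_sub: "cyc_arrows Q1 I \<subseteq> Q1"
  unfolding cyc_arrows_def by blast

lemma aus_Q0_Inl[simp]: "Inl i \<in> aus_Q0 Q0 Q1 I \<longleftrightarrow> i \<in> Q0"
  unfolding aus_Q0_def by auto
lemma aus_Q0_Inr[simp]: "Inr a \<in> aus_Q0 Q0 Q1 I \<longleftrightarrow> a \<in> cyc_arrows Q1 I"
  unfolding aus_Q0_def by auto
lemma aus_Q1_Old[simp]: "Old b \<in> aus_Q1 Q1 I \<longleftrightarrow> b \<in> Q1 \<and> b \<notin> cyc_arrows Q1 I"
  unfolding aus_Q1_def by auto
lemma aus_Q1_Plus[simp]: "Plus b \<in> aus_Q1 Q1 I \<longleftrightarrow> b \<in> cyc_arrows Q1 I"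
  unfolding aus_Q1_def by auto
lemma aus_Q1_Minus[simp]: "Minus b \<in> aus_Q1 Q1 I \<longleftrightarrow> b \<in> cyc_arrows Q1 I"
  unfolding aus_Q1_def by auto

lemma res_f_Phi[simp]: "res_f Q1 I (Phi_f f) = f"
  unfolding res_f_def Phi_f_def by auto

lemma res_V_Phi[simp]: "res_V (Phi_V s V f) = V"
  unfolding res_V_def Phi_V_def by auto

lemma Phi_V_Inl[simp]: "Phi_V s V f (Inl i) = V i" and Phi_V_Inr[simp]: "Phi_V s V f (Inr a) = f a ` V (s a)"
  unfolding Phi_V_def by auto

lemma Phi_f_simps[simp]: "Phi_f f (Old b) = f b" "Phi_f f (Plus b) = f b" "Phi_f f (Minus b) = id"
  unfolding Phi_f_def by auto

lemma rep_homD: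
  assumes "g \<in> rep_hom sV sW Q0 Q1 s t V f W h"
  shows "\<forall>i\<in>Q0. g i ` V i \<subseteq> W i \<and> lin_on sV sW (V i) (g i)"
    "\<And>a x. a \<in> Q1 \<Longrightarrow> x \<in> V (s a) \<Longrightarrow> g (t a) (f a x) = h a (g (s a) x)"
    "\<And>i x. i \<notin> Q0 \<or> x \<notin> V i \<Longrightarrow> g i x = 0"
  using assms unfolding rep_hom_def by auto

lemma resA:
  assumes G: "G \<in> rep_hom scV scW (aus_Q0 Q0 Q1 I) (aus_Q1 Q1 I) (aus_s s) (aus_t t) (Phi_V s V f) (Phi_f f) W h"
  shows "res_mor G \<in> rep_hom scV scW Q0 Q1 s t V f (res_V W) (res_f Q1 I h)"
proof -
  have G1: "\<forall>x\<in>aus_Q0 Q0 Q1 I. G x ` Phi_V s V f x \<subseteq> W x \<and> lin_on scV scW (Phi_V s V f x) (G x)"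
   and G2: "\<forall>c\<in>aus_Q1 Q1 I. \<forall>y\<in>Phi_V s V f (aus_s s c). G (aus_t t c) (Phi_f f c y) = h c (G (aus_s s c) y)"
   and G3: "\<forall>x y. x \<notin> aus_Q0 Q0 Q1 I \<or> y \<notin> Phi_V s V f x \<longrightarrow> G x y = 0"
    using G unfolding rep_hom_def by auto
  have "\<forall>a\<in>Q1. \<forall>x\<in>V (s a). res_mor G (t a) (f a x) = res_f Q1 I h a (res_mor G (s a) x)"
  proof (intro ballI)
    fix a x assume a: "a \<in> Q1" and x: "x \<in> V (s a)"
    show "res_mor G (t a) (f a x) = res_f Q1 I h a (res_mor G (s a) x)"
    proof (cases "a \<in> cyc_arrows Q1 I")
      case True
      have 1: "G (Inr a) (f a x) = h (Plus a) (G (Inl (s a)) x)"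
        using G2[rule_format, of "Plus a" x] True x by simp
      have 2: "G (Inl (t a)) (f a x) = h (Minus a) (G (Inr a) (f a x))"
        using G2[rule_format, of "Minus a" "f a x"] True x by simp
      show ?thesis using 1 2 True unfolding res_mor_def res_f_def by simp
    next
      case False
      then show ?thesis using G2[rule_format, of "Old a" x] a x unfolding res_mor_def res_f_def by simp
    qed
  qed
  moreover have "\<forall>i\<in>Q0. res_mor G i ` V i \<subseteq> res_V W i \<and> lin_on scV scW (V i) (res_mor G i)"
    using G1 unfolding res_mor_def res_V_def by (metis Phi_V_Inl aus_Q0_Inl)
  moreover have "\<forall>i x. i \<notin> Q0 \<or> x \<notin> V i \<longrightarrow> res_mor G i x = 0"
    using G3 unfolding res_mor_def by (metis Phi_V_Inl aus_Q0_Inl)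
  ultimately show ?thesis unfolding rep_hom_def by blast
qed

lemma injA:
  "inj_on res_mor (rep_hom scV scW (aus_Q0 Q0 Q1 I) (aus_Q1 Q1 I) (aus_s s) (aus_t t) (Phi_V s V f) (Phi_f f) W h)"
proof (rule inj_onI)
  fix G1 G2 assume A: "G1 \<in> rep_hom scV scW (aus_Q0 Q0 Q1 I) (aus_Q1 Q1 I) (aus_s s) (aus_t t) (Phi_V s V f) (Phi_f f) W h"
    and B: "G2 \<in> rep_hom scV scW (aus_Q0 Q0 Q1 I) (aus_Q1 Q1 I) (aus_s s) (aus_t t) (Phi_V s V f) (Phi_f f) W h"
    and E: "res_mor G1 = res_mor G2"
  have L: "G1 (Inl i) = G2 (Inl i)" for i using E unfolding res_mor_def by metis
  have "G1 x y = G2 x y" for x y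
  proof (cases x)
    case (Inl i) then show ?thesis using L by simp
  next
    case (Inr a)
    show ?thesis
    proof (cases "a \<in> cyc_arrows Q1 I \<and> y \<in> f a ` V (s a)")
      case True
      then obtain z where z: "z \<in> V (s a)" "y = f a z" by auto
      have "G1 (Inr a) y = h (Plus a) (G1 (Inl (s a)) z)"
        using rep_homD(2)[OF A, of "Plus a" z] True z by simp
      moreover have "G2 (Inr a) y = h (Plus a) (G2 (Inl (s a)) z)"
        using rep_homD(2)[OF B, of "Plus a" z] True z by simp
      ultimately show ?thesis using L Inr by simp
    next
      case False
      then have "G1 (Inr a) y = 0" "G2 (Inr a) y = 0"
        using rep_homD(3)[OF A, of "Inr a" y] rep_homD(3)[OF B, of "Inr a" y] by auto
      then show ?thesis using Inr by simp
    qed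
  qed
  then show "G1 = G2" by blast
qed
lemma resB:
  assumes N: "is_rep scW (aus_Q0 Q0 Q1 I) (aus_Q1 Q1 I) (aus_s s) (aus_t t) (aus_I Q1 I) W h"
   and G: "G \<in> rep_hom scW scV (aus_Q0 Q0 Q1 I) (aus_Q1 Q1 I) (aus_s s) (aus_t t) W h (Phi_V s V f) (Phi_f f)"
  shows "res_mor G \<in> rep_hom scW scV Q0 Q1 s t (res_V W) (res_f Q1 I h) V f"
proof -
  have G1: "\<forall>x\<in>aus_Q0 Q0 Q1 I. G x ` W x \<subseteq> Phi_V s V f x \<and> lin_on scW scV (W x) (G x)"
   and G2: "\<forall>c\<in>aus_Q1 Q1 I. \<forall>y\<in>W (aus_s s c). G (aus_t t c) (h c y) = Phi_f f c (G (aus_s s c) y)"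
   and G3: "\<forall>x y. x \<notin> aus_Q0 Q0 Q1 I \<or> y \<notin> W x \<longrightarrow> G x y = 0"
    using G unfolding rep_hom_def by auto
  have Nm: "\<forall>c\<in>aus_Q1 Q1 I. h c ` W (aus_s s c) \<subseteq> W (aus_t t c)"
    using N unfolding is_rep_def by blast
  have "\<forall>a\<in>Q1. \<forall>x\<in>res_V W (s a). res_mor G (t a) (res_f Q1 I h a x) = f a (res_mor G (s a) x)"
  proof (intro ballI)
    fix a x assume a: "a \<in> Q1" and x: "x \<in> res_V W (s a)"
    show "res_mor G (t a) (res_f Q1 I h a x) = f a (res_mor G (s a) x)"
    proof (cases "a \<in> cyc_arrows Q1 I")
      case True
      have x': "x \<in> W (Inl (s a))" using x unfolding res_V_def .
      have m: "h (Plus a) x \<in> W (Inr a)" using Nm[rule_format, of "Plus a"] True x' by auto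
      have 1: "G (Inr a) (h (Plus a) x) = f a (G (Inl (s a)) x)"
        using G2[rule_format, of "Plus a" x] True x' by simp
      have 2: "G (Inl (t a)) (h (Minus a) (h (Plus a) x)) = G (Inr a) (h (Plus a) x)"
        using G2[rule_format, of "Minus a" "h (Plus a) x"] True m by simp
      show ?thesis using 1 2 True unfolding res_mor_def res_f_def by simp
    next
      case False
      then show ?thesis using G2[rule_format, of "Old a" x] a x unfolding res_mor_def res_f_def res_V_def by simp
    qed
  qed
  moreover have "\<forall>i\<in>Q0. res_mor G i ` res_V W i \<subseteq> V i \<and> lin_on scW scV (res_V W i) (res_mor G i)"
    using G1 unfolding res_mor_def res_V_def by (metis Phi_V_Inl aus_Q0_Inl)
  moreover have "\<forall>i x. i \<notin> Q0 \<or> x \<notin> res_V W i \<longrightarrow> res_mor G i x = 0"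
    using G3 unfolding res_mor_def res_V_def by (metis aus_Q0_Inl)
  ultimately show ?thesis unfolding rep_hom_def by blast
qed

lemma injB:
  "inj_on res_mor (rep_hom scW scV (aus_Q0 Q0 Q1 I) (aus_Q1 Q1 I) (aus_s s) (aus_t t) W h (Phi_V s V f) (Phi_f f))"
proof (rule inj_onI)
  fix G1 G2 assume A: "G1 \<in> rep_hom scW scV (aus_Q0 Q0 Q1 I) (aus_Q1 Q1 I) (aus_s s) (aus_t t) W h (Phi_V s V f) (Phi_f f)"
    and B: "G2 \<in> rep_hom scW scV (aus_Q0 Q0 Q1 I) (aus_Q1 Q1 I) (aus_s s) (aus_t t) W h (Phi_V s V f) (Phi_f f)"
    and E: "res_mor G1 = res_mor G2"
  have L: "G1 (Inl i) = G2 (Inl i)" for i using E unfolding res_mor_def by metis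
  have "G1 x y = G2 x y" for x y
  proof (cases x)
    case (Inl i) then show ?thesis using L by simp
  next
    case (Inr a)
    show ?thesis
    proof (cases "a \<in> cyc_arrows Q1 I \<and> y \<in> W (Inr a)")
      case True
      have "G1 (Inl (t a)) (h (Minus a) y) = G1 (Inr a) y"
        using rep_homD(2)[OF A, of "Minus a" y] True by simp
      moreover have "G2 (Inl (t a)) (h (Minus a) y) = G2 (Inr a) y"
        using rep_homD(2)[OF B, of "Minus a" y] True by simp
      ultimately show ?thesis using L Inr by simp
    next
      case False
      then have "G1 (Inr a) y = 0" "G2 (Inr a) y = 0"
        using rep_homD(3)[OF A, of "Inr a" y] rep_homD(3)[OF B, of "Inr a" y] by auto
      then show ?thesis using Inr by simp
    qed
  qed
  then show "G1 = G2" by blast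
qed

lemma Phi_mor_Inl[simp]: "Phi_mor Q1 I s t V f g (Inl i) = g i"
  unfolding Phi_mor_def by simp
lemma Phi_mor_Inr: "Phi_mor Q1 I s t V f g (Inr a) y = (if a \<in> cyc_arrows Q1 I \<and> y \<in> f a ` V (s a) then g (t a) y else 0)"
  unfolding Phi_mor_def by simp

lemma lin_on_mono: "lin_on sV sW A g \<Longrightarrow> B \<subseteq> A \<Longrightarrow> (\<And>x. x \<in> B \<Longrightarrow> g' x = g x) \<Longrightarrow>
   (\<forall>x\<in>B. \<forall>y\<in>B. x + y \<in> B) \<Longrightarrow> (\<forall>c. \<forall>x\<in>B. sV c x \<in> B) \<Longrightarrow> lin_on sV sW B g'"
  unfolding lin_on_def by (simp add: subset_iff)

lemma image_subspace:
  assumes "lin_on sc sc A F" "\<forall>x\<in>A. \<forall>y\<in>A. x + y \<in> A" "\<forall>c. \<forall>x\<in>A. sc c x \<in> A"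
  shows "\<forall>x\<in>F ` A. \<forall>y\<in>F ` A. x + y \<in> F ` A" "\<forall>c. \<forall>x\<in>F ` A. sc c x \<in> F ` A"
proof -
  show "\<forall>x\<in>F ` A. \<forall>y\<in>F ` A. x + y \<in> F ` A"
  proof (intro ballI)
    fix x y assume "x \<in> F ` A" "y \<in> F ` A"
    then obtain a b where ab: "a \<in> A" "b \<in> A" "x = F a" "y = F b" by auto
    then have "x + y = F (a + b)" using assms(1) by (simp add: lin_on_def)
    then show "x + y \<in> F ` A" using assms(2) ab by auto
  qed
  show "\<forall>c. \<forall>x\<in>F ` A. sc c x \<in> F ` A"
  proof (intro allI ballI)
    fix c x assume "x \<in> F ` A"
    then obtain a where ab: "a \<in> A" "x = F a" by auto
    then have "sc c x = F (sc c a)" using assms(1) by (simp add: lin_on_def)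
    then show "sc c x \<in> F ` A" using assms(3) ab by auto
  qed
qed

lemma subspace_closed:
  assumes "vector_space sc" "module.subspace sc A"
  shows "\<forall>x\<in>A. \<forall>y\<in>A. x + y \<in> A" "\<forall>c. \<forall>x\<in>A. sc c x \<in> A"
proof -
  interpret vector_space sc by fact
  show "\<forall>x\<in>A. \<forall>y\<in>A. x + y \<in> A" "\<forall>c. \<forall>x\<in>A. sc c x \<in> A"
    using assms(2) by (auto simp: subspace_def)
qed

lemma gentle_st: "gentle Q0 Q1 s t I \<Longrightarrow> \<forall>a\<in>Q1. s a \<in> Q0 \<and> t a \<in> Q0"
  unfolding gentle_def by (elim conjE) assumption

lemma PhiIn:
  assumes vsV: "vector_space scV" and gentle: "gentle Q0 Q1 s t I"
    and M: "is_rep scV Q0 Q1 s t I V f"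
    and M': "is_rep scU Q0 Q1 s t I V' f'"
    and g: "g \<in> rep_hom scV scU Q0 Q1 s t V f V' f'"
  shows "Phi_mor Q1 I s t V f g \<in> rep_hom scV scU (aus_Q0 Q0 Q1 I) (aus_Q1 Q1 I) (aus_s s) (aus_t t)
           (Phi_V s V f) (Phi_f f) (Phi_V s V' f') (Phi_f f')"
proof -
  have g1: "\<forall>i\<in>Q0. g i ` V i \<subseteq> V' i \<and> lin_on scV scU (V i) (g i)"
   and g2: "\<forall>a\<in>Q1. \<forall>x\<in>V (s a). g (t a) (f a x) = f' a (g (s a) x)"
   and g3: "\<forall>i x. i \<notin> Q0 \<or> x \<notin> V i \<longrightarrow> g i x = 0"
    using g unfolding rep_hom_def by auto
  have st: "\<forall>a\<in>Q1. s a \<in> Q0 \<and> t a \<in> Q0" using gentle_st[OF gentle] .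
  have Ms: "\<forall>i\<in>Q0. module.subspace scV (V i)" using M unfolding is_rep_def by blast
  have Mf: "\<forall>a\<in>Q1. f a ` V (s a) \<subseteq> V (t a) \<and> lin_on scV scV (V (s a)) (f a)"
    using M unfolding is_rep_def by blast
  have cQ: "a \<in> cyc_arrows Q1 I \<Longrightarrow> a \<in> Q1" for a by (rule subsetD[OF cyc_sub])
  have P1: "\<forall>x\<in>aus_Q0 Q0 Q1 I. Phi_mor Q1 I s t V f g x ` Phi_V s V f x \<subseteq> Phi_V s V' f' x
      \<and> lin_on scV scU (Phi_V s V f x) (Phi_mor Q1 I s t V f g x)"
  proof
    fix x assume x: "x \<in> aus_Q0 Q0 Q1 I"
    show "Phi_mor Q1 I s t V f g x ` Phi_V s V f x \<subseteq> Phi_V s V' f' x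
      \<and> lin_on scV scU (Phi_V s V f x) (Phi_mor Q1 I s t V f g x)"
    proof (cases x)
      case (Inl i) then show ?thesis using x g1 by simp
    next
      case (Inr a)
      then have ac: "a \<in> cyc_arrows Q1 I" and a: "a \<in> Q1" using x cQ by auto
      have im: "Phi_mor Q1 I s t V f g (Inr a) ` (f a ` V (s a)) \<subseteq> f' a ` V' (s a)"
      proof
        fix y assume "y \<in> Phi_mor Q1 I s t V f g (Inr a) ` (f a ` V (s a))"
        then obtain z where z: "z \<in> V (s a)" "y = g (t a) (f a z)" using ac by (auto simp: Phi_mor_Inr)
        then have "y = f' a (g (s a) z)" using g2 a by simp
        moreover have "g (s a) z \<in> V' (s a)" using g1 st a z by blast
        ultimately show "y \<in> f' a ` V' (s a)" by blast
      qed
      have cl: "\<forall>x\<in>V (s a). \<forall>y\<in>V (s a). x + y \<in> V (s a)" "\<forall>c. \<forall>x\<in>V (s a). scV c x \<in> V (s a)"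
        using subspace_closed[OF vsV] Ms st a by blast+
      have lin: "lin_on scV scU (f a ` V (s a)) (Phi_mor Q1 I s t V f g (Inr a))"
        apply (rule lin_on_mono[of _ _ "V (t a)" "g (t a)"])
        using g1 st a Mf image_subspace[of scV "V (s a)" "f a", OF _ cl] by (auto simp: Phi_mor_Inr ac)
      show ?thesis using Inr im lin by simp
    qed
  qed
  have P2: "\<forall>c\<in>aus_Q1 Q1 I. \<forall>y\<in>Phi_V s V f (aus_s s c).
      Phi_mor Q1 I s t V f g (aus_t t c) (Phi_f f c y) = Phi_f f' c (Phi_mor Q1 I s t V f g (aus_s s c) y)"
  proof (intro ballI)
    fix c y assume c: "c \<in> aus_Q1 Q1 I" and y: "y \<in> Phi_V s V f (aus_s s c)"
    show "Phi_mor Q1 I s t V f g (aus_t t c) (Phi_f f c y) = Phi_f f' c (Phi_mor Q1 I s t V f g (aus_s s c) y)"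
    proof (cases c)
      case (Old b) then show ?thesis using c y g2 by simp
    next
      case (Plus a) then show ?thesis using c y g2 cQ by (auto simp: Phi_mor_Inr)
    next
      case (Minus a) then show ?thesis using c y by (auto simp: Phi_mor_Inr)
    qed
  qed
  have P3: "\<forall>x y. x \<notin> aus_Q0 Q0 Q1 I \<or> y \<notin> Phi_V s V f x \<longrightarrow> Phi_mor Q1 I s t V f g x y = 0"
  proof (intro allI impI)
    fix x y assume "x \<notin> aus_Q0 Q0 Q1 I \<or> y \<notin> Phi_V s V f x"
    then show "Phi_mor Q1 I s t V f g x y = 0" using g3 by (cases x) (auto simp: Phi_mor_Inr)
  qed
  show ?thesis unfolding rep_hom_def using P1 P2 P3 by blast
qed

lemma Phi_res:
  assumes G: "G \<in> rep_hom scV scU (aus_Q0 Q0 Q1 I) (aus_Q1 Q1 I) (aus_s s) (aus_t t)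
           (Phi_V s V f) (Phi_f f) (Phi_V s V' f') (Phi_f f')"
  shows "Phi_mor Q1 I s t V f (res_mor G) = G"
proof -
  have G2: "\<forall>c\<in>aus_Q1 Q1 I. \<forall>y\<in>Phi_V s V f (aus_s s c). G (aus_t t c) (Phi_f f c y) = Phi_f f' c (G (aus_s s c) y)"
   and G3: "\<forall>x y. x \<notin> aus_Q0 Q0 Q1 I \<or> y \<notin> Phi_V s V f x \<longrightarrow> G x y = 0"
    using G unfolding rep_hom_def by auto
  have "Phi_mor Q1 I s t V f (res_mor G) x y = G x y" for x y
  proof (cases x)
    case (Inl i) then show ?thesis by (simp add: res_mor_def)
  next
    case (Inr a)
    show ?thesis
    proof (cases "a \<in> cyc_arrows Q1 I \<and> y \<in> f a ` V (s a)")
      case True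
      then show ?thesis using G2[rule_format, of "Minus a" y] Inr by (simp add: Phi_mor_Inr res_mor_def)
    next
      case False
      then show ?thesis using G3 Inr by (auto simp: Phi_mor_Inr)
    qed
  qed
  then show ?thesis by blast
qed

theorem lemma3p3:
  fixes Q0 :: "'q set" and Q1 :: "'r set" and s t :: "'r \<Rightarrow> 'q" and I :: "('r \<times> 'r) set"
    and scV :: "'k::field \<Rightarrow> 'v::ab_group_add \<Rightarrow> 'v"
    and scW :: "'k \<Rightarrow> 'w::ab_group_add \<Rightarrow> 'w"
    and scU :: "'k \<Rightarrow> 'u::ab_group_add \<Rightarrow> 'u"
    and V :: "'q \<Rightarrow> 'v set" and f :: "'r \<Rightarrow> 'v \<Rightarrow> 'v"
    and V' :: "'q \<Rightarrow> 'u set" and f' :: "'r \<Rightarrow> 'u \<Rightarrow> 'u"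
    and W :: "('q + 'r) \<Rightarrow> 'w set" and h :: "'r aus_arr \<Rightarrow> 'w \<Rightarrow> 'w"
  assumes K: "algebraically_closed TYPE('k)"
    and gentle: "gentle Q0 Q1 s t I"
    and vsV: "vector_space scV" and vsW: "vector_space scW" and vsU: "vector_space scU"
    and M: "is_rep scV Q0 Q1 s t I V f"
    and M': "is_rep scU Q0 Q1 s t I V' f'"
    and N: "is_rep scW (aus_Q0 Q0 Q1 I) (aus_Q1 Q1 I) (aus_s s) (aus_t t) (aus_I Q1 I) W h"
  shows
    "(res_mor ` rep_hom scV scW (aus_Q0 Q0 Q1 I) (aus_Q1 Q1 I) (aus_s s) (aus_t t)
                  (Phi_V s V f) (Phi_f f) W h
       \<subseteq> rep_hom scV scW Q0 Q1 s t (res_V (Phi_V s V f)) (res_f Q1 I (Phi_f f)) (res_V W) (res_f Q1 I h)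
     \<and> res_V (Phi_V s V f) = V \<and> res_f Q1 I (Phi_f f) = f
     \<and> inj_on res_mor (rep_hom scV scW (aus_Q0 Q0 Q1 I) (aus_Q1 Q1 I) (aus_s s) (aus_t t)
                  (Phi_V s V f) (Phi_f f) W h))
     \<comment> \<open>(i), first map: Hom(Phi M, N) -> Hom(res Phi M, res N) = Hom(M, res N) is injective\<close>
     \<and> (res_mor ` rep_hom scW scV (aus_Q0 Q0 Q1 I) (aus_Q1 Q1 I) (aus_s s) (aus_t t)
                  W h (Phi_V s V f) (Phi_f f)
       \<subseteq> rep_hom scW scV Q0 Q1 s t (res_V W) (res_f Q1 I h) (res_V (Phi_V s V f)) (res_f Q1 I (Phi_f f))
     \<and> inj_on res_mor (rep_hom scW scV (aus_Q0 Q0 Q1 I) (aus_Q1 Q1 I) (aus_s s) (aus_t t)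
                  W h (Phi_V s V f) (Phi_f f)))
     \<comment> \<open>(i), second map: Hom(N, Phi M) -> Hom(res N, res Phi M) = Hom(res N, M) is injective\<close>
     \<and> (bij_betw (Phi_mor Q1 I s t V f) (rep_hom scV scU Q0 Q1 s t V f V' f')
        (rep_hom scV scU (aus_Q0 Q0 Q1 I) (aus_Q1 Q1 I) (aus_s s) (aus_t t)
           (Phi_V s V f) (Phi_f f) (Phi_V s V' f') (Phi_f f')))
     \<comment> \<open>(ii) Phi is fully faithful\<close>
     \<and> (\<forall>g\<in>rep_hom scV scU Q0 Q1 s t V f V' f'.
        (\<forall>i\<in>Q0. inj_on (g i) (V i)) \<longrightarrow>
        (\<forall>x\<in>aus_Q0 Q0 Q1 I. inj_on (Phi_mor Q1 I s t V f g x) (Phi_V s V f x)))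
     \<comment> \<open>(ii) Phi preserves injective morphisms\<close>
     \<and> (\<forall>g\<in>rep_hom scV scU Q0 Q1 s t V f V' f'.
        (\<forall>i\<in>Q0. g i ` V i = V' i) \<longrightarrow>
        (\<forall>x\<in>aus_Q0 Q0 Q1 I. Phi_mor Q1 I s t V f g x ` Phi_V s V f x = Phi_V s V' f' x))
     \<comment> \<open>(ii) Phi preserves surjective morphisms\<close>"
proof -
  have A: "res_mor ` rep_hom scV scW (aus_Q0 Q0 Q1 I) (aus_Q1 Q1 I) (aus_s s) (aus_t t)
                  (Phi_V s V f) (Phi_f f) W h
       \<subseteq> rep_hom scV scW Q0 Q1 s t (res_V (Phi_V s V f)) (res_f Q1 I (Phi_f f)) (res_V W) (res_f Q1 I h)"
    using resA by fastforce
  have B: "res_mor ` rep_hom scW scV (aus_Q0 Q0 Q1 I) (aus_Q1 Q1 I) (aus_s s) (aus_t t)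
                  W h (Phi_V s V f) (Phi_f f)
       \<subseteq> rep_hom scW scV Q0 Q1 s t (res_V W) (res_f Q1 I h) (res_V (Phi_V s V f)) (res_f Q1 I (Phi_f f))"
    using resB[OF N] by fastforce
  have C: "bij_betw (Phi_mor Q1 I s t V f) (rep_hom scV scU Q0 Q1 s t V f V' f')
        (rep_hom scV scU (aus_Q0 Q0 Q1 I) (aus_Q1 Q1 I) (aus_s s) (aus_t t)
           (Phi_V s V f) (Phi_f f) (Phi_V s V' f') (Phi_f f'))"
  proof (rule bij_betw_imageI)
    show "inj_on (Phi_mor Q1 I s t V f) (rep_hom scV scU Q0 Q1 s t V f V' f')"
    proof (rule inj_onI)
      fix g1 g2 assume "Phi_mor Q1 I s t V f g1 = Phi_mor Q1 I s t V f g2"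
      then have "\<And>i. g1 i = g2 i" by (metis Phi_mor_Inl)
      then show "g1 = g2" by blast
    qed
    show "Phi_mor Q1 I s t V f ` rep_hom scV scU Q0 Q1 s t V f V' f' =
      rep_hom scV scU (aus_Q0 Q0 Q1 I) (aus_Q1 Q1 I) (aus_s s) (aus_t t)
           (Phi_V s V f) (Phi_f f) (Phi_V s V' f') (Phi_f f')"
    proof
      show "Phi_mor Q1 I s t V f ` rep_hom scV scU Q0 Q1 s t V f V' f' \<subseteq> rep_hom scV scU (aus_Q0 Q0 Q1 I) (aus_Q1 Q1 I) (aus_s s) (aus_t t)
           (Phi_V s V f) (Phi_f f) (Phi_V s V' f') (Phi_f f')"
        using PhiIn[OF vsV gentle M M'] by blast
    next
      show "rep_hom scV scU (aus_Q0 Q0 Q1 I) (aus_Q1 Q1 I) (aus_s s) (aus_t t)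
           (Phi_V s V f) (Phi_f f) (Phi_V s V' f') (Phi_f f') \<subseteq> Phi_mor Q1 I s t V f ` rep_hom scV scU Q0 Q1 s t V f V' f'"
      proof
        fix G assume G: "G \<in> rep_hom scV scU (aus_Q0 Q0 Q1 I) (aus_Q1 Q1 I) (aus_s s) (aus_t t)
           (Phi_V s V f) (Phi_f f) (Phi_V s V' f') (Phi_f f')"
        have "res_mor G \<in> rep_hom scV scU Q0 Q1 s t V f V' f'"
          using resA[OF G] by simp
        then show "G \<in> Phi_mor Q1 I s t V f ` rep_hom scV scU Q0 Q1 s t V f V' f'"
          using Phi_res[OF G] by (metis image_eqI)
      qed
    qed
  qed
  have st: "\<forall>a\<in>Q1. s a \<in> Q0 \<and> t a \<in> Q0" using gentle_st[OF gentle] .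
  have Mf: "\<forall>a\<in>Q1. f a ` V (s a) \<subseteq> V (t a)"
    using M unfolding is_rep_def by blast
  have cQ: "a \<in> cyc_arrows Q1 I \<Longrightarrow> a \<in> Q1" for a by (rule subsetD[OF cyc_sub])
  have D: "\<forall>g\<in>rep_hom scV scU Q0 Q1 s t V f V' f'.
        (\<forall>i\<in>Q0. inj_on (g i) (V i)) \<longrightarrow>
        (\<forall>x\<in>aus_Q0 Q0 Q1 I. inj_on (Phi_mor Q1 I s t V f g x) (Phi_V s V f x))"
  proof (intro ballI impI)
    fix g x assume g: "g \<in> rep_hom scV scU Q0 Q1 s t V f V' f'" and inj: "\<forall>i\<in>Q0. inj_on (g i) (V i)"
      and x: "x \<in> aus_Q0 Q0 Q1 I"
    show "inj_on (Phi_mor Q1 I s t V f g x) (Phi_V s V f x)"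
    proof (cases x)
      case (Inl i) then show ?thesis using inj x by simp
    next
      case (Inr a)
      then have ac: "a \<in> cyc_arrows Q1 I" and a: "a \<in> Q1" using x cQ by auto
      have "inj_on (g (t a)) (f a ` V (s a))" using inj_on_subset[of "g (t a)" "V (t a)" "f a ` V (s a)"] inj st a Mf by simp
      moreover have "\<forall>y\<in>f a ` V (s a). Phi_mor Q1 I s t V f g (Inr a) y = g (t a) y"
        using ac by (simp add: Phi_mor_Inr)
      ultimately show ?thesis using Inr inj_on_cong by (metis Phi_V_Inr)
    qed
  qed
  have E: "\<forall>g\<in>rep_hom scV scU Q0 Q1 s t V f V' f'.
        (\<forall>i\<in>Q0. g i ` V i = V' i) \<longrightarrow>
        (\<forall>x\<in>aus_Q0 Q0 Q1 I. Phi_mor Q1 I s t V f g x ` Phi_V s V f x = Phi_V s V' f' x)"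
  proof (intro ballI impI)
    fix g x assume g: "g \<in> rep_hom scV scU Q0 Q1 s t V f V' f'" and sur: "\<forall>i\<in>Q0. g i ` V i = V' i"
      and x: "x \<in> aus_Q0 Q0 Q1 I"
    have g2: "\<forall>a\<in>Q1. \<forall>x\<in>V (s a). g (t a) (f a x) = f' a (g (s a) x)"
      using g unfolding rep_hom_def by auto
    show "Phi_mor Q1 I s t V f g x ` Phi_V s V f x = Phi_V s V' f' x"
    proof (cases x)
      case (Inl i) then show ?thesis using sur x by simp
    next
      case (Inr a)
      then have ac: "a \<in> cyc_arrows Q1 I" and a: "a \<in> Q1" using x cQ by auto
      have "Phi_mor Q1 I s t V f g (Inr a) ` (f a ` V (s a)) = g (t a) ` f a ` V (s a)"
        using ac by (auto simp: Phi_mor_Inr)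
      also have "\<dots> = f' a ` g (s a) ` V (s a)"
        using g2 a by (auto simp: image_iff)
      also have "\<dots> = f' a ` V' (s a)" using sur st a by simp
      finally show ?thesis using Inr by simp
    qed
  qed
  show ?thesis by (intro conjI A B C D E injA injB res_V_Phi res_f_Phi)
qed


end
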